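(* For $k\in\mathbb{Z}_{\geq 0}$ let $!k=k!\sum_{\ell=0}^{k}\frac{(-1)^{\ell}}{\ell!}$ denote the $k$-th derangement number. Consider the formal series $$S_{\gamma}=\sum_{k=1}^{\infty}\frac{(-1)^{k}\,(!k)}{k},\qquad S_{\delta}=\sum_{k=1}^{\infty}(-1)^{k-1}(k-1)!,$$ and, for $\alpha\in\mathbb{R}$, the formal series $S(\alpha)=S_{\gamma}+\alpha S_{\delta}$, i.e. the series $\sum_{k=1}^{\infty}\left[\frac{(-1)^{k}\,(!k)}{k}+\alpha(-1)^{k-1}(k-1)!\right]$. Then $S(\alpha)$ is a conventionally convergent series if and only if $\alpha=1/e$.
   Context: Both $S_{\gamma}$ and $S_{\delta}$ are divergent series (in the conventional sense); they are Borel-summable to the Euler–Mascheroni constant $\gamma$ and the Euler–Gompertz constant $\delta=\int_0^\infty e^{-t}/(t+1)\,dt$, respectively. "Conventionally convergent" means convergent as an ordinary series of real numbers (convergence of the sequence of partial sums), with the linear combination $S_\gamma+\alpha S_\delta$ formed term by term. *)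

theory Defs
  imports "HOL-Analysis.Analysis"
begin

definition derangement :: "nat \<Rightarrow> real" where
  "derangement k = fact k * (\<Sum>l\<le>k. (-1) ^ l / fact l)"

definition S_gamma_term :: "nat \<Rightarrow> real" where
  "S_gamma_term k = (-1) ^ k * derangement k / real k"

definition S_delta_term :: "nat \<Rightarrow> real" where
  "S_delta_term k = (-1) ^ (k - 1) * fact (k - 1)"

definition S_alpha_term :: "real \<Rightarrow> nat \<Rightarrow> real" where
  "S_alpha_term \<alpha> k = S_gamma_term k + \<alpha> * S_delta_term k"

end

theory Submission
  imports Defs
begin

definition DD :: "nat \<Rightarrow> real" where
  "DD k = (\<Sum>l\<le>k. (-1) ^ l / fact l)"

lemma term_eq: "S_alpha_term \<alpha> (Suc n) = (-1) ^ Suc n * fact n * (DD (Suc n) - \<alpha>)"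
proof -
  have "fact (Suc n) / real (Suc n) = (fact n :: real)"
    by (simp add: fact_Suc)
  hence "S_gamma_term (Suc n) = (-1) ^ Suc n * fact n * DD (Suc n)"
    unfolding S_gamma_term_def derangement_def DD_def
    by (metis (no_types, lifting) mult.assoc mult.commute times_divide_eq_left)
  thus ?thesis unfolding S_alpha_term_def S_delta_term_def by (simp add: algebra_simps)
qed

lemma exp_sums: "(\<lambda>l. (-1) ^ l / fact l :: real) sums exp (-1)"
  using exp_converges[of "-1::real"] by (simp add: divide_inverse mult.commute)

lemma DD_lim: "DD \<longlonglongrightarrow> exp (-1)"
proof -
  have "(\<lambda>m. \<Sum>l<m. (-1) ^ l / fact l :: real) \<longlonglongrightarrow> exp (-1)"
    using exp_sums by (simp add: sums_def)
  hence "(\<lambda>m. \<Sum>l<Suc m. (-1) ^ l / fact l :: real) \<longlonglongrightarrow> exp (-1)"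
    by (rule LIMSEQ_Suc)
  thus ?thesis unfolding DD_def lessThan_Suc_atMost .
qed

lemma tail: "\<exists>T. DD k - exp (-1) = (-1) ^ k * T \<and> 0 \<le> T \<and> T \<le> 1 / fact (Suc k)"
proof -
  define a where "a = (\<lambda>j. 1 / fact (j + Suc k) :: real)"
  have s: "(\<lambda>j. (-1) ^ (j + Suc k) / fact (j + Suc k) :: real) sums (exp (-1) - DD k)"
    using sums_split_initial_segment[OF exp_sums, of "Suc k"]
    unfolding DD_def lessThan_Suc_atMost .
  have az: "a \<longlonglongrightarrow> 0"
  proof -
    have "(\<lambda>j. 1 / fact j :: real) \<longlonglongrightarrow> 0"
      using summable_LIMSEQ_zero[OF summable_exp[of 1]] by (simp add: divide_inverse)
    hence "(\<lambda>j. 1 / fact (j + Suc k) :: real) \<longlonglongrightarrow> 0"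
      by (rule LIMSEQ_ignore_initial_segment)
    thus ?thesis by (simp add: a_def)
  qed
  have ap: "\<And>n. 0 \<le> a n" by (simp add: a_def)
  have am: "\<And>n. a (Suc n) \<le> a n"
    unfolding a_def by (intro divide_left_mono fact_mono) auto
  note L = summable_Leibniz'[OF az ap am]
  define T where "T = (\<Sum>i. (-1)^i * a i)"
  have T0: "0 \<le> T" using L(2)[of 0] by (simp add: T_def)
  have T1: "T \<le> 1 / fact (Suc k)" using L(4)[of 0] by (simp add: T_def a_def)
  have "(\<lambda>j. (-1) ^ Suc k * ((-1)^j * a j)) sums ((-1) ^ Suc k * T)"
    using sums_mult[OF summable_sums[OF L(1)], of "(-1) ^ Suc k"] by (simp add: T_def)
  moreover have "(\<lambda>j. (-1) ^ Suc k * ((-1)^j * a j)) = (\<lambda>j. (-1) ^ (j + Suc k) / fact (j + Suc k) :: real)"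
    by (rule ext) (simp add: a_def power_add)
  ultimately have "exp (-1) - DD k = (-1) ^ Suc k * T" using s sums_unique2 by metis
  hence "DD k - exp (-1) = (-1) ^ k * T" by simp
  with T0 T1 show ?thesis by blast
qed

lemma good: "summable (\<lambda>n. S_alpha_term (1 / exp 1) (Suc n))"
proof (rule summable_comparison_test'[where N=1])
  show "summable (\<lambda>n. inverse (real n ^ 2))" by (rule inverse_power_summable) simp
next
  fix n :: nat assume n: "n \<ge> 1"
  obtain T where T: "DD (Suc n) - exp (-1) = (-1) ^ Suc n * T" "0 \<le> T" "T \<le> 1 / fact (Suc (Suc n))"
    using tail by blast
  have e: "1 / exp 1 = exp (-1::real)" by (simp add: exp_minus field_simps)
  have "S_alpha_term (1 / exp 1) (Suc n) = fact n * T"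
    unfolding term_eq e T(1) by (simp add: power_add flip: power_mult_distrib mult.assoc)
  hence "norm (S_alpha_term (1 / exp 1) (Suc n)) = fact n * T" using T(2) by simp
  also have "\<dots> \<le> fact n * (1 / fact (Suc (Suc n)))"
    using T(3) by (intro mult_left_mono) auto
  also have "\<dots> = 1 / (real (Suc n) * real (Suc (Suc n)))"
  proof -
    have "fact (Suc (Suc n)) = real (Suc (Suc n)) * (real (Suc n) * fact n)"
      by (simp add: fact_Suc)
    moreover have "(fact n :: real) > 0" by simp
    ultimately show ?thesis by (simp del: of_nat_Suc fact_Suc)
  qed
  also have "\<dots> \<le> inverse (real n ^ 2)"
  proof -
    have "real n ^ 2 \<le> real (Suc n) * real (Suc (Suc n))"
      by (simp add: power2_eq_square mult_mono)
    moreover have "real n ^ 2 > 0" using n by simp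
    ultimately show ?thesis
      by (simp add: inverse_eq_divide divide_left_mono del: of_nat_Suc)
  qed
  finally show "norm (S_alpha_term (1 / exp 1) (Suc n)) \<le> inverse (real n ^ 2)" .
qed

lemma bad: assumes "summable (\<lambda>n. S_alpha_term \<alpha> (Suc n))" shows "\<alpha> = 1 / exp 1"
proof -
  have z: "(\<lambda>n. S_alpha_term \<alpha> (Suc n)) \<longlonglongrightarrow> 0" by (rule summable_LIMSEQ_zero[OF assms])
  have "(\<lambda>n. DD (Suc n) - \<alpha>) \<longlonglongrightarrow> 0"
  proof (rule Lim_null_comparison[OF _ tendsto_norm_zero[OF z]])
    show "\<forall>\<^sub>F n in sequentially. norm (DD (Suc n) - \<alpha>) \<le> norm (S_alpha_term \<alpha> (Suc n))"
    proof (intro always_eventually allI)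
      fix n
      have "norm (DD (Suc n) - \<alpha>) \<le> fact n * norm (DD (Suc n) - \<alpha>)"
        by (simp add: mult_le_cancel_right1)
      also have "\<dots> = norm (S_alpha_term \<alpha> (Suc n))"
        unfolding term_eq by (simp add: abs_mult)
      finally show "norm (DD (Suc n) - \<alpha>) \<le> norm (S_alpha_term \<alpha> (Suc n))" .
    qed
  qed
  hence "(\<lambda>n. DD (Suc n)) \<longlonglongrightarrow> \<alpha>" by (simp add: LIM_zero_iff)
  moreover have "(\<lambda>n. DD (Suc n)) \<longlonglongrightarrow> exp (-1)" using DD_lim by (rule LIMSEQ_Suc)
  ultimately have "\<alpha> = exp (-1)" using LIMSEQ_unique by blast
  thus ?thesis by (simp add: exp_minus field_simps)
qed

theorem proposition1:
  fixes \<alpha> :: real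
  shows "summable (\<lambda>n. S_alpha_term \<alpha> (Suc n)) \<longleftrightarrow> \<alpha> = 1 / exp 1"
  using good bad by blast

end
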